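(* Let $p\ge1$ and let $\Phi$ be a Young function with $\Phi(t)\lesssim t^p$ for $t\ge1$. Suppose that a diffeomorphism $\psi:\mathbb{R}^n\to\mathbb{R}^n$ induces a bounded composition operator $C_\psi$ from $\mathcal{M}_\Phi^p(\mathbb{R}^n)$ to itself. Then there is a constant $C>0$ such that for all $x_0\in\mathbb{R}^n$ and all $f\in\mathcal{M}_\Phi^p(\mathbb{R}^n)$, \[ \|f(D\psi(x_0)\,\cdot)\|_{\mathcal{M}_\Phi^p}\le C\|f\|_{\mathcal{M}_\Phi^p}. \]
   Context: A Young function is a convex $\Phi:[0,\infty)\to[0,\infty)$ with $\Phi(0)=0$, $\lim_{t\to\infty}\Phi(t)=\infty$. $g\lesssim h$ means $g\le Ch$ for a constant $C>0$. For a ball $B$, $\|f\|_{\Phi,B}=\inf\{\lambda>0:\frac1{|B|}\int_B\Phi(|f|/\lambda)\le1\}$. $\mathcal{M}_\Phi^p(\mathbb{R}^n)$ is the set of measurable $f$ with $\|f\|_{\mathcal{M}_\Phi^p}=\sup_{a\in\mathbb{R}^n,r>0}|B(a,r)|^{1/p}\|f\|_{\Phi,B(a,r)}<\infty$. A diffeomorphism is a bijection $\psi$ with $\psi,\psi^{-1}$ differentiable; $D\psi(x_0)$ is its Jacobi matrix at $x_0$; $C_\psi f=f\circ\psi$. *)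

theory Defs
  imports "HOL-Analysis.Analysis"
begin

definition young_function :: "(real \<Rightarrow> real) \<Rightarrow> bool" where
  "young_function \<Phi> \<longleftrightarrow> convex_on {0..} \<Phi> \<and> (\<forall>t\<ge>0. \<Phi> t \<ge> 0) \<and> \<Phi> 0 = 0
     \<and> filterlim \<Phi> at_top at_top"

text \<open>Luxemburg-type average norm on a ball B:
  inf of lambda > 0 with (1/|B|) int_B Phi(|f|/lambda) \<le> 1 (inf of the empty set is top).\<close>
definition orlicz_ball_norm ::
  "(real \<Rightarrow> real) \<Rightarrow> ('a::euclidean_space \<Rightarrow> real) \<Rightarrow> 'a set \<Rightarrow> ennreal" where
  "orlicz_ball_norm \<Phi> f B = Inf {ennreal l | l. l > 0 \<and>
      (\<integral>\<^sup>+ x \<in> B. ennreal (\<Phi> (\<bar>f x\<bar> / l)) \<partial>lebesgue) / ennreal (measure lebesgue B) \<le> 1}"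

definition morrey_orlicz_norm ::
  "(real \<Rightarrow> real) \<Rightarrow> real \<Rightarrow> ('a::euclidean_space \<Rightarrow> real) \<Rightarrow> ennreal" where
  "morrey_orlicz_norm \<Phi> p f = (SUP (a, r) \<in> UNIV \<times> {0<..}.
      ennreal (measure lebesgue (ball a r) powr (1 / p)) * orlicz_ball_norm \<Phi> f (ball a r))"

definition morrey_orlicz_space ::
  "(real \<Rightarrow> real) \<Rightarrow> real \<Rightarrow> ('a::euclidean_space \<Rightarrow> real) set" where
  "morrey_orlicz_space \<Phi> p = {f. f \<in> borel_measurable lebesgue \<and> morrey_orlicz_norm \<Phi> p f < top}"

definition diffeomorphism :: "('a::euclidean_space \<Rightarrow> 'a) \<Rightarrow> bool" where
  "diffeomorphism \<psi> \<longleftrightarrow> bij \<psi> \<and> (\<forall>x. \<psi> differentiable at x) \<and> (\<forall>x. inv \<psi> differentiable at x)"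

definition bounded_composition_morrey_orlicz ::
  "(real \<Rightarrow> real) \<Rightarrow> real \<Rightarrow> ('a::euclidean_space \<Rightarrow> 'a) \<Rightarrow> bool" where
  "bounded_composition_morrey_orlicz \<Phi> p \<psi> \<longleftrightarrow>
     (\<forall>f \<in> morrey_orlicz_space \<Phi> p. f \<circ> \<psi> \<in> morrey_orlicz_space \<Phi> p) \<and>
     (\<exists>C>0. \<forall>f \<in> morrey_orlicz_space \<Phi> p.
        morrey_orlicz_norm \<Phi> p (f \<circ> \<psi>) \<le> ennreal C * morrey_orlicz_norm \<Phi> p f)"

end

theory Submission
  imports Defs
begin


lemma phi_scale:
  assumes Y: "young_function \<Phi>" and u: "0 \<le> u" "u \<le> 1" and y: "0 \<le> y"
  shows "\<Phi> (u * y) \<le> u * \<Phi> y"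
proof -
  have cv: "convex_on {0..} \<Phi>" and z: "\<Phi> 0 = 0" using Y by (auto simp: young_function_def)
  have "\<Phi> ((1 - u) * 0 + u * y) \<le> (1 - u) * \<Phi> 0 + u * \<Phi> y"
    using convex_onD[OF cv, of u 0 y] u y by auto
  then show ?thesis using z by simp
qed

lemma phi_nonneg: "young_function \<Phi> \<Longrightarrow> 0 \<le> t \<Longrightarrow> 0 \<le> \<Phi> t"
  by (auto simp: young_function_def)

lemma phi_mono:
  assumes Y: "young_function \<Phi>" and "0 \<le> s" "s \<le> t"
  shows "\<Phi> s \<le> \<Phi> t"
proof (cases "t = 0")
  case True then show ?thesis using assms by simp
next
  case False
  then have t: "t > 0" using assms by simp
  have "\<Phi> ((s / t) * t) \<le> (s/t) * \<Phi> t"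
    by (rule phi_scale[OF Y]) (use assms t in auto)
  also have "\<dots> \<le> \<Phi> t"
    by (rule mult_left_le_one_le) (use phi_nonneg[OF Y, of t] assms t in auto)
  finally show ?thesis using t by simp
qed

lemma Phi_comp_meas:
  assumes Y: "young_function \<Phi>" and f: "f \<in> borel_measurable M" and l: "l > 0"
  shows "(\<lambda>x. \<Phi> (\<bar>f x\<bar> / l)) \<in> borel_measurable M"
proof -
  define \<Phi>' where "\<Phi>' = (\<lambda>s. \<Phi> (max s 0))"
  have "mono \<Phi>'" unfolding \<Phi>'_def
    by (intro monoI phi_mono[OF Y]) auto
  then have "\<Phi>' \<in> borel_measurable borel" by (rule borel_measurable_mono)
  then have "(\<lambda>x. \<Phi>' (\<bar>f x\<bar> / l)) \<in> borel_measurable M"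
    using f by measurable
  moreover have "\<Phi>' (\<bar>f x\<bar> / l) = \<Phi> (\<bar>f x\<bar> / l)" for x
    using l by (simp add: \<Phi>'_def)
  ultimately show ?thesis by simp
qed

lemma phi_big:
  assumes Y: "young_function \<Phi>"
  obtains T where "T > 0" "\<Phi> T > 0"
proof -
  have "filterlim \<Phi> at_top at_top" using Y by (simp add: young_function_def)
  then have "eventually (\<lambda>t. \<Phi> t > 1) at_top" by (simp add: filterlim_at_top_dense)
  then obtain T0 where "\<forall>t\<ge>T0. \<Phi> t > 1" by (auto simp: eventually_at_top_linorder)
  then have "\<Phi> (max T0 1) > 0" by (metis max.cobounded1 less_trans zero_less_one)
  then show ?thesis using that[of "max T0 1"] by simp
qed

lemma meas_by_inverse:
  fixes g :: "'a::euclidean_space \<Rightarrow> 'a"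
  assumes gh: "\<And>x. h (g x) = x" "\<And>y. g (h y) = y" and hd: "\<And>y. h differentiable at y"
  shows "g \<in> lebesgue \<rightarrow>\<^sub>M lebesgue"
proof (rule measurableI)
  fix S :: "'a set" assume S: "S \<in> sets lebesgue"
  have "g -` S \<inter> space lebesgue = h ` S"
    using gh by (auto simp: image_iff) (metis gh(1))
  moreover have "h ` S \<in> sets lebesgue"
    by (rule differentiable_image_in_sets_lebesgue[OF S])
       (use hd in \<open>auto simp: differentiable_at_imp_differentiable_on\<close>)
  ultimately show "g -` S \<inter> space lebesgue \<in> sets lebesgue" by simp
qed auto




lemma avg_le_iff:
  fixes X :: ennreal
  assumes m: "0 < m"
  shows "(X / ennreal m \<le> 1) \<longleftrightarrow> (X \<le> ennreal m)"
proof (cases X)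
  case (real x)
  then have "X / ennreal m = ennreal (x / m)" using m by (simp add: divide_ennreal)
  then show ?thesis using real m
    by (simp add: ennreal_le_iff divide_le_eq_1 flip: ennreal_1)
next
  case top
  then show ?thesis using m by (simp add: ennreal_top_divide top_unique)
qed

lemma norm_le_I:
  assumes "l > 0"
    and "(\<integral>\<^sup>+ x \<in> B. ennreal (\<Phi> (\<bar>g x\<bar> / l)) \<partial>lebesgue) / ennreal (measure lebesgue B) \<le> 1"
  shows "orlicz_ball_norm \<Phi> g B \<le> ennreal l"
  unfolding orlicz_ball_norm_def by (rule Inf_lower) (use assms in blast)

lemma norm_lt_D:
  assumes Y: "young_function \<Phi>" and lt: "orlicz_ball_norm \<Phi> g B < ennreal l"
  shows "(\<integral>\<^sup>+ x \<in> B. ennreal (\<Phi> (\<bar>g x\<bar> / l)) \<partial>lebesgue) / ennreal (measure lebesgue B) \<le> 1"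
proof -
  from lt obtain l' where l': "l' > 0" "ennreal l' < ennreal l"
    and av: "(\<integral>\<^sup>+ x \<in> B. ennreal (\<Phi> (\<bar>g x\<bar> / l')) \<partial>lebesgue) / ennreal (measure lebesgue B) \<le> 1"
    unfolding orlicz_ball_norm_def Inf_less_iff by blast
  have ll: "l' < l" using l' by (simp add: ennreal_less_iff)
  have "(\<integral>\<^sup>+ x \<in> B. ennreal (\<Phi> (\<bar>g x\<bar> / l)) \<partial>lebesgue) \<le> (\<integral>\<^sup>+ x \<in> B. ennreal (\<Phi> (\<bar>g x\<bar> / l')) \<partial>lebesgue)"
  proof (rule nn_integral_mono)
    fix x
    have "\<bar>g x\<bar> / l \<le> \<bar>g x\<bar> / l'"
      using l' ll by (intro divide_left_mono) auto
    then have "\<Phi> (\<bar>g x\<bar> / l) \<le> \<Phi> (\<bar>g x\<bar> / l')"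
      using l' ll by (intro phi_mono[OF Y]) auto
    then show "ennreal (\<Phi> (\<bar>g x\<bar> / l)) * indicator B x \<le> ennreal (\<Phi> (\<bar>g x\<bar> / l')) * indicator B x"
      by (intro mult_right_mono ennreal_leI) auto
  qed
  then show ?thesis
    using av by (meson divide_right_mono_ennreal order_trans)
qed

lemma norm_ge_I:
  assumes "\<And>l. l > 0 \<Longrightarrow> (\<integral>\<^sup>+ x \<in> B. ennreal (\<Phi> (\<bar>g x\<bar> / l)) \<partial>lebesgue) / ennreal (measure lebesgue B) \<le> 1 \<Longrightarrow> L \<le> ennreal l"
  shows "L \<le> orlicz_ball_norm \<Phi> g B"
  unfolding orlicz_ball_norm_def by (rule Inf_greatest) (use assms in blast)

lemma morrey_ge:
  assumes "r > 0"
  shows "ennreal (measure lebesgue (ball a r) powr (1 / p)) * orlicz_ball_norm \<Phi> f (ball a r)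
     \<le> morrey_orlicz_norm \<Phi> p f"
  unfolding morrey_orlicz_norm_def
  by (rule SUP_upper2[where i="(a, r)"]) (use assms in auto)

lemma morrey_le:
  assumes "\<And>a r. r > 0 \<Longrightarrow> ennreal (measure lebesgue (ball a r) powr (1 / p)) * orlicz_ball_norm \<Phi> f (ball a r) \<le> M"
  shows "morrey_orlicz_norm \<Phi> p f \<le> M"
  unfolding morrey_orlicz_norm_def
  by (rule SUP_least) (use assms in auto)

lemma ball_measure_pos:
  fixes a :: "'a::euclidean_space"
  shows "r > 0 \<Longrightarrow> 0 < measure lebesgue (ball a r)"
  by (metis content_ball_pos measure_completion sets_lborel borel_open open_ball)




lemma ennreal_cancel_div:
  "0 < (a::real) \<Longrightarrow> 0 < m \<Longrightarrow> (ennreal a * X) / ennreal (a * m) = X / ennreal m"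
  by (smt (verit, ccfv_threshold) ennreal_eq_zero_iff ennreal_mult
    ennreal_times_divide mult.commute mult_divide_eq_ennreal top_neq_ennreal
    zero_less_mult_iff)

lemma T_eq: "(\<lambda>x::'a::euclidean_space. c + (\<Sum>j\<in>Basis. (t * (x \<bullet> j)) *\<^sub>R j)) = (\<lambda>x. c + t *\<^sub>R x)"
  by (metis (no_types, lifting) ext euclidean_representation inner_scaleR_left)

lemma affine_meas:
  fixes c :: "'a::euclidean_space"
  assumes t: "t \<noteq> 0"
  shows "(\<lambda>x. c + t *\<^sub>R x) \<in> lebesgue \<rightarrow>\<^sub>M lebesgue"
  using lebesgue_affine_measurable[where c="\<lambda>_. t" and t=c] t by (simp add: T_eq)

lemma affine_nn_integral:
  fixes c :: "'a::euclidean_space" and F :: "'a \<Rightarrow> ennreal"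
  assumes t: "t > 0" and F: "F \<in> borel_measurable lebesgue"
  shows "(\<integral>\<^sup>+ x. F x \<partial>lebesgue) = ennreal (t ^ DIM('a)) * (\<integral>\<^sup>+ z. F (c + t *\<^sub>R z) \<partial>lebesgue)"
proof -
  define T where "T = (\<lambda>x::'a. c + t *\<^sub>R x)"
  have eq: "lebesgue = density (distr lebesgue lebesgue T) (\<lambda>_. (\<Prod>j\<in>(Basis::'a set). \<bar>t\<bar>))"
    using lebesgue_affine_euclidean[where c="\<lambda>_. t" and t=c] t by (simp add: T_eq T_def)
  have Tm: "T \<in> lebesgue \<rightarrow>\<^sub>M lebesgue" unfolding T_def by (rule affine_meas) (use t in simp)
  have F': "F \<in> borel_measurable (distr lebesgue lebesgue T)"
    using F measurable_cong_sets[OF sets_distr[of lebesgue lebesgue T] refl, where N="borel::ennreal measure"] by simp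
  have pr: "(\<Prod>j\<in>(Basis::'a set). \<bar>t\<bar>) = t ^ DIM('a)" using t by simp
  have "(\<integral>\<^sup>+ x. F x \<partial>lebesgue) = (\<integral>\<^sup>+ x. F x \<partial>density (distr lebesgue lebesgue T) (\<lambda>_. (\<Prod>j\<in>(Basis::'a set). \<bar>t\<bar>)))"
    by (rule arg_cong[OF eq])
  also have "\<dots> = (\<integral>\<^sup>+ x. ennreal (\<Prod>j\<in>(Basis::'a set). \<bar>t\<bar>) * F x \<partial>distr lebesgue lebesgue T)"
    by (rule nn_integral_density[OF _ F']) simp
  also have "\<dots> = (\<integral>\<^sup>+ x. ennreal (t ^ DIM('a)) * F x \<partial>distr lebesgue lebesgue T)"
    by (simp only: pr)
  also have "\<dots> = (\<integral>\<^sup>+ z. ennreal (t ^ DIM('a)) * F (T z) \<partial>lebesgue)"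
    using F Tm by (subst nn_integral_distr) auto
  also have "\<dots> = ennreal (t ^ DIM('a)) * (\<integral>\<^sup>+ z. F (T z) \<partial>lebesgue)"
    using F Tm by (subst nn_integral_cmult) auto
  finally show ?thesis by (simp add: T_def)
qed

lemma ball_affine_iff:
  fixes c :: "'a::euclidean_space"
  assumes t: "t > 0"
  shows "(c + t *\<^sub>R z \<in> ball (c + t *\<^sub>R a) (t * r)) \<longleftrightarrow> z \<in> ball a r"
proof -
  have "dist (c + t *\<^sub>R a) (c + t *\<^sub>R z) = t * dist a z"
    using t by (simp add: dist_norm algebra_simps flip: scaleR_diff_right)
  then show ?thesis using t by simp
qed

lemma affine_set_integral:
  fixes c :: "'a::euclidean_space" and G :: "'a \<Rightarrow> ennreal"
  assumes t: "t > 0" and G: "G \<in> borel_measurable lebesgue"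
  shows "(\<integral>\<^sup>+ x \<in> ball (c + t *\<^sub>R a) (t * r). G x \<partial>lebesgue)
       = ennreal (t ^ DIM('a)) * (\<integral>\<^sup>+ z \<in> ball a r. G (c + t *\<^sub>R z) \<partial>lebesgue)"
proof -
  have "(\<integral>\<^sup>+ x \<in> ball (c + t *\<^sub>R a) (t * r). G x \<partial>lebesgue)
       = ennreal (t ^ DIM('a)) * (\<integral>\<^sup>+ z. G (c + t *\<^sub>R z) * indicator (ball (c + t *\<^sub>R a) (t * r)) (c + t *\<^sub>R z) \<partial>lebesgue)"
    by (rule affine_nn_integral[OF t]) (intro borel_measurable_times_ennreal G borel_measurable_indicator fmeasurableD lmeasurable_ball)
  also have "(\<lambda>z. G (c + t *\<^sub>R z) * indicator (ball (c + t *\<^sub>R a) (t * r)) (c + t *\<^sub>R z)) = (\<lambda>z. G (c + t *\<^sub>R z) * indicator (ball a r) z)"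
    by (simp only: indicator_def ball_affine_iff[OF t])
  finally show ?thesis .
qed

lemma measure_ball_lebesgue:
  fixes c :: "'a::euclidean_space"
  assumes "r \<ge> 0"
  shows "measure lebesgue (ball c r) = r ^ DIM('a) * measure lborel (ball (0::'a) 1)"
  using content_ball_conv_unit_ball[OF assms, of c]
  by (metis measure_completion sets_lborel borel_open open_ball)

lemma affine_ball_measure:
  fixes c :: "'a::euclidean_space"
  assumes t: "t > 0" and r: "r \<ge> 0"
  shows "measure lebesgue (ball (c + t *\<^sub>R a) (t * r)) = t ^ DIM('a) * measure lebesgue (ball a r)"
proof -
  have e1: "measure lebesgue (ball (c + t *\<^sub>R a) (t*r)) = (t*r)^DIM('a) * measure lborel (ball (0::'a) 1)"
    by (rule measure_ball_lebesgue) (use t r in simp)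
  have e2: "measure lebesgue (ball a r) = r^DIM('a) * measure lborel (ball (0::'a) 1)"
    by (rule measure_ball_lebesgue) (use t r in simp)
  show ?thesis unfolding e1 e2 by (simp only: power_mult_distrib mult.assoc)
qed

lemma affine_norm:
  fixes c :: "'a::euclidean_space" and g :: "'a \<Rightarrow> real"
  assumes Y: "young_function \<Phi>" and t: "t > 0" and r: "r > 0" and g: "g \<in> borel_measurable lebesgue"
  shows "orlicz_ball_norm \<Phi> g (ball (c + t *\<^sub>R a) (t * r)) = orlicz_ball_norm \<Phi> (\<lambda>z. g (c + t *\<^sub>R z)) (ball a r)"
proof -
  have m: "0 < measure lebesgue (ball a r)" using ball_measure_pos[OF r] .
  have tn: "0 < t ^ DIM('a)" using t by simp
  have "(\<integral>\<^sup>+ x \<in> ball (c + t *\<^sub>R a) (t * r). ennreal (\<Phi> (\<bar>g x\<bar> / l)) \<partial>lebesgue) / ennreal (measure lebesgue (ball (c + t *\<^sub>R a) (t * r)))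
     = (\<integral>\<^sup>+ z \<in> ball a r. ennreal (\<Phi> (\<bar>g (c + t *\<^sub>R z)\<bar> / l)) \<partial>lebesgue) / ennreal (measure lebesgue (ball a r))"
    if l: "l > 0" for l
  proof -
    have "(\<lambda>x. ennreal (\<Phi> (\<bar>g x\<bar> / l))) \<in> borel_measurable lebesgue"
      using Phi_comp_meas[OF Y g l] by measurable
    then have I: "(\<integral>\<^sup>+ x \<in> ball (c + t *\<^sub>R a) (t * r). ennreal (\<Phi> (\<bar>g x\<bar> / l)) \<partial>lebesgue)
       = ennreal (t ^ DIM('a)) * (\<integral>\<^sup>+ z \<in> ball a r. ennreal (\<Phi> (\<bar>g (c + t *\<^sub>R z)\<bar> / l)) \<partial>lebesgue)"
      by (rule affine_set_integral[OF t])
    have M: "measure lebesgue (ball (c + t *\<^sub>R a) (t * r)) = t ^ DIM('a) * measure lebesgue (ball a r)"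
      by (rule affine_ball_measure[OF t]) (use r in simp)
    show ?thesis by (simp only: I M ennreal_cancel_div[OF tn m])
  qed
  note eq = this
  have S: "(l > 0 \<and> (\<integral>\<^sup>+ x \<in> ball (c + t *\<^sub>R a) (t * r). ennreal (\<Phi> (\<bar>g x\<bar> / l)) \<partial>lebesgue) / ennreal (measure lebesgue (ball (c + t *\<^sub>R a) (t * r))) \<le> 1)
     = (l > 0 \<and> (\<integral>\<^sup>+ z \<in> ball a r. ennreal (\<Phi> (\<bar>g (c + t *\<^sub>R z)\<bar> / l)) \<partial>lebesgue) / ennreal (measure lebesgue (ball a r)) \<le> 1)" for l
  proof (cases "l > 0")
    case True
    show ?thesis by (simp only: eq[OF True])
  qed simp
  show ?thesis unfolding orlicz_ball_norm_def by (simp only: S)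
qed




locale MO =
  fixes \<Phi> :: "real \<Rightarrow> real" and p :: real and \<psi> :: "real^'n \<Rightarrow> real^'n" and K :: real and c :: real
  assumes p1: "p \<ge> 1" and Y: "young_function \<Phi>" and c1: "c \<ge> 1"
    and growth: "\<And>t. t \<ge> 1 \<Longrightarrow> \<Phi> t \<le> c * t powr p"
    and diffeo: "diffeomorphism \<psi>" and Kpos: "K > 0"
    and comp: "\<And>f. f \<in> morrey_orlicz_space \<Phi> p \<Longrightarrow> f \<circ> \<psi> \<in> morrey_orlicz_space \<Phi> p"
    and bnd: "\<And>f. f \<in> morrey_orlicz_space \<Phi> p \<Longrightarrow>
        morrey_orlicz_norm \<Phi> p (f \<circ> \<psi>) \<le> ennreal K * morrey_orlicz_norm \<Phi> p f"
begin

abbreviation "N \<equiv> morrey_orlicz_norm \<Phi> p"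
abbreviation "SP \<equiv> morrey_orlicz_space \<Phi> p"

lemma powr_split:
  assumes "0 \<le> (x::real)" "0 \<le> y"
  shows "ennreal ((x * y) powr (1 / p)) = ennreal (x powr (1/p)) * ennreal (y powr (1/p))"
  using assms by (simp add: powr_mult ennreal_mult)

lemma morrey_dilate:
  fixes g :: "real^'n \<Rightarrow> real" and b0 :: "real^'n"
  assumes t: "t > 0" and g: "g \<in> borel_measurable lebesgue"
  defines "h \<equiv> (\<lambda>y. g ((1/t) *\<^sub>R (y - b0)))"
  shows "h \<in> borel_measurable lebesgue"
    and "N h \<le> ennreal ((t ^ CARD('n)) powr (1/p)) * N g"
proof -
  have hm: "(\<lambda>y::real^'n. (- ((1/t) *\<^sub>R b0)) + (1/t) *\<^sub>R y) \<in> lebesgue \<rightarrow>\<^sub>M lebesgue"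
    by (rule affine_meas) (use t in simp)
  have "h = g \<circ> (\<lambda>y::real^'n. (- ((1/t) *\<^sub>R b0)) + (1/t) *\<^sub>R y)"
    unfolding h_def by (auto simp: algebra_simps)
  then show hmeas: "h \<in> borel_measurable lebesgue"
    using measurable_comp[OF hm g] by simp
  show "N h \<le> ennreal ((t ^ CARD('n)) powr (1/p)) * N g"
  proof (rule morrey_le)
    fix a' :: "real^'n" and r' :: real assume r': "r' > 0"
    define a where "a = (1/t) *\<^sub>R (a' - b0)"
    define r where "r = r' / t"
    have r: "r > 0" using r' t by (simp add: r_def)
    have ba: "ball a' r' = ball (b0 + t *\<^sub>R a) (t * r)"
      using t by (simp add: a_def r_def)
    have hn: "orlicz_ball_norm \<Phi> h (ball (b0 + t *\<^sub>R a) (t * r)) = orlicz_ball_norm \<Phi> (\<lambda>z. h (b0 + t *\<^sub>R z)) (ball a r)"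
      by (rule affine_norm[OF Y t r hmeas])
    have hz: "(\<lambda>z. h (b0 + t *\<^sub>R z)) = g"
      using t by (simp add: h_def)
    have ms: "measure lebesgue (ball (b0 + t *\<^sub>R a) (t * r)) = t ^ CARD('n) * measure lebesgue (ball a r)"
      using affine_ball_measure[OF t, of r b0 a] r by simp
    have "ennreal (measure lebesgue (ball a' r') powr (1 / p)) * orlicz_ball_norm \<Phi> h (ball a' r')
        = ennreal ((t ^ CARD('n)) powr (1/p)) * (ennreal (measure lebesgue (ball a r) powr (1 / p)) * orlicz_ball_norm \<Phi> g (ball a r))"
      unfolding ba hn hz ms using t by (simp add: powr_split mult.assoc)
    also have "\<dots> \<le> ennreal ((t ^ CARD('n)) powr (1/p)) * N g"
      by (intro mult_left_mono morrey_ge r) simp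
    finally show "ennreal (measure lebesgue (ball a' r') powr (1 / p)) * orlicz_ball_norm \<Phi> h (ball a' r')
        \<le> ennreal ((t ^ CARD('n)) powr (1/p)) * N g" .
  qed
qed

lemma space_meas: "f \<in> SP \<Longrightarrow> f \<in> borel_measurable lebesgue"
  by (simp add: morrey_orlicz_space_def)

lemma space_fin: "f \<in> SP \<Longrightarrow> N f < top"
  by (simp add: morrey_orlicz_space_def)

lemma chain:
  fixes f :: "real^'n \<Rightarrow> real"
  assumes f: "f \<in> SP" and t: "t > 0" and r: "r > 0"
  shows "ennreal (measure lebesgue (ball a r) powr (1/p))
          * orlicz_ball_norm \<Phi> (\<lambda>z. f ((1/t) *\<^sub>R (\<psi> (x0 + t *\<^sub>R z) - \<psi> x0))) (ball a r)
         \<le> ennreal K * N f"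
proof -
  define h where "h = (\<lambda>y. f ((1/t) *\<^sub>R (y - \<psi> x0)))"
  define \<tau> where "\<tau> = (t ^ CARD('n)) powr (1/p)"
  have tau: "\<tau> > 0" using t by (simp add: \<tau>_def)
  have hm: "h \<in> borel_measurable lebesgue" and hN: "N h \<le> ennreal \<tau> * N f"
    using morrey_dilate[OF t space_meas[OF f], of "\<psi> x0"] by (simp_all add: h_def \<tau>_def)
  have "N h < top"
    using hN space_fin[OF f] by (metis ennreal_mult_less_top ennreal_less_top order_le_less_trans)
  then have hS: "h \<in> SP" using hm by (simp add: morrey_orlicz_space_def)
  have hpS: "h \<circ> \<psi> \<in> SP" by (rule comp[OF hS])
  have hpm: "h \<circ> \<psi> \<in> borel_measurable lebesgue" by (rule space_meas[OF hpS])
  have tr: "t * r > 0" using t r by simp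
  have "ennreal (measure lebesgue (ball (x0 + t *\<^sub>R a) (t * r)) powr (1/p)) * orlicz_ball_norm \<Phi> (h \<circ> \<psi>) (ball (x0 + t *\<^sub>R a) (t * r))
        \<le> N (h \<circ> \<psi>)"
    by (rule morrey_ge[OF tr])
  also have "\<dots> \<le> ennreal K * N h" by (rule bnd[OF hS])
  also have "\<dots> \<le> ennreal K * (ennreal \<tau> * N f)" by (intro mult_left_mono hN) simp
  finally have ineq: "ennreal (measure lebesgue (ball (x0 + t *\<^sub>R a) (t * r)) powr (1/p)) * orlicz_ball_norm \<Phi> (h \<circ> \<psi>) (ball (x0 + t *\<^sub>R a) (t * r))
        \<le> ennreal K * (ennreal \<tau> * N f)" .
  have hn: "orlicz_ball_norm \<Phi> (h \<circ> \<psi>) (ball (x0 + t *\<^sub>R a) (t * r)) = orlicz_ball_norm \<Phi> (\<lambda>z. (h \<circ> \<psi>) (x0 + t *\<^sub>R z)) (ball a r)"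
    by (rule affine_norm[OF Y t r hpm])
  have hz: "(\<lambda>z. (h \<circ> \<psi>) (x0 + t *\<^sub>R z)) = (\<lambda>z. f ((1/t) *\<^sub>R (\<psi> (x0 + t *\<^sub>R z) - \<psi> x0)))"
    by (simp add: h_def)
  have ms: "measure lebesgue (ball (x0 + t *\<^sub>R a) (t * r)) = t ^ CARD('n) * measure lebesgue (ball a r)"
    using affine_ball_measure[OF t, of r x0 a] r by simp
  have "ennreal \<tau> * (ennreal (measure lebesgue (ball a r) powr (1/p))
          * orlicz_ball_norm \<Phi> (\<lambda>z. f ((1/t) *\<^sub>R (\<psi> (x0 + t *\<^sub>R z) - \<psi> x0))) (ball a r))
        \<le> ennreal \<tau> * (ennreal K * N f)"
    using ineq unfolding hn hz ms using t
    by (simp add: powr_split \<tau>_def mult.assoc mult.left_commute)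
  then show ?thesis
    using tau by (subst (asm) ennreal_mult_le_mult_iff) auto
qed

end




lemma ind_real:
  fixes c p m V ME :: real
  assumes c: "c \<ge> 1" and p: "p \<ge> 1" and m: "0 < m" "m \<le> V" "m \<le> ME"
  defines "l \<equiv> max ((c * (m / V)) powr (1/p)) (c * (m / V))"
  shows "l > 0" and "V powr (1/p) * l \<le> c * ME powr (1/p)"
    and "l \<le> 1 \<Longrightarrow> c * m \<le> l powr p * V" and "c * m \<le> l * V"
proof -
  have V: "V > 0" using m by simp
  have q: "c * (m / V) > 0" using c m V by simp
  show lpos: "l > 0" unfolding l_def using q by simp
  have "V powr (1/p) * (c * (m / V)) powr (1/p) = (c * m) powr (1/p)"
    using V c m by (simp add: powr_mult[symmetric] field_simps)
  also have "\<dots> = c powr (1/p) * m powr (1/p)" using c m by (simp add: powr_mult)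
  also have "\<dots> \<le> c * m powr (1/p)"
  proof -
    have "c powr (1/p) \<le> c powr 1" using c p by (intro powr_mono) auto
    then show ?thesis using c by (intro mult_right_mono) auto
  qed
  finally have A: "V powr (1/p) * (c * (m / V)) powr (1/p) \<le> c * m powr (1/p)" .
  have "V powr (1/p) * (c * (m / V)) = c * m * V powr (1/p - 1)"
    using V by (simp add: powr_diff field_simps)
  also have "\<dots> \<le> c * m * m powr (1/p - 1)"
    using c m V p by (intro mult_left_mono powr_mono2') (auto simp: field_simps)
  also have "\<dots> = c * m powr (1/p)"
    using m by (simp add: powr_diff field_simps)
  finally have B: "V powr (1/p) * (c * (m / V)) \<le> c * m powr (1/p)" .
  have "V powr (1/p) * l \<le> c * m powr (1/p)"
    unfolding l_def using A B by (simp add: max_def)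
  also have "\<dots> \<le> c * ME powr (1/p)"
    using c m p by (intro mult_left_mono powr_mono2) auto
  finally show "V powr (1/p) * l \<le> c * ME powr (1/p)" .
  show "c * m \<le> l * V"
  proof -
    have "c * (m / V) \<le> l" unfolding l_def by simp
    then show ?thesis using V by (simp add: field_simps)
  qed
  assume "l \<le> 1"
  have "c * (m / V) = ((c * (m / V)) powr (1/p)) powr p"
    using q p V c m by (simp add: powr_powr)
  also have "\<dots> \<le> l powr p"
    unfolding l_def using q p by (intro powr_mono2) auto
  finally show "c * m \<le> l powr p * V" using V by (simp add: field_simps)
qed


lemma ennreal_mult_le_div:
  assumes k: "0 < k" and le: "ennreal k * X \<le> ennreal V"
  shows "X \<le> ennreal (V / k)"
proof -
  have "X = ennreal (1/k) * (ennreal k * X)"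
    using k by (simp add: mult.assoc[symmetric] ennreal_mult[symmetric])
  also have "\<dots> \<le> ennreal (1/k) * ennreal V" by (rule mult_left_mono[OF le]) simp
  also have "\<dots> = ennreal (V / k)"
    using k by (cases "V \<ge> 0") (auto simp: ennreal_mult[symmetric] ennreal_neg divide_nonpos_pos)
  finally show ?thesis .
qed

context MO
begin

lemma phi0: "\<Phi> 0 = 0" using Y by (simp add: young_function_def)

lemma ind_integral:
  assumes E: "E \<in> sets lebesgue" and B: "B \<in> sets lebesgue"
  shows "(\<integral>\<^sup>+ x \<in> B. ennreal (\<Phi> (\<bar>indicator E x\<bar> / l)) \<partial>lebesgue)
       = ennreal (\<Phi> (1/l)) * emeasure lebesgue (E \<inter> B)"
proof -
  have "(\<lambda>x. ennreal (\<Phi> (\<bar>indicator E x\<bar> / l)) * indicator B x) = (\<lambda>x. ennreal (\<Phi> (1/l)) * indicator (E \<inter> B) x)"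
    by (auto simp: indicator_def phi0)
  then show ?thesis using E B by (simp add: nn_integral_cmult_indicator)
qed

lemma NI:
  fixes E :: "(real^'n) set"
  assumes E: "E \<in> sets lebesgue" and Efin: "emeasure lebesgue E < top"
  shows "N (indicator E) \<le> ennreal (c * measure lebesgue E powr (1/p))"
proof (rule morrey_le)
  fix a :: "real^'n" and r :: real assume r: "r > 0"
  define V where "V = measure lebesgue (ball a r)"
  have V: "V > 0" unfolding V_def by (rule ball_measure_pos[OF r])
  have Bs: "ball a r \<in> sets lebesgue" by (simp add: lmeasurable_ball fmeasurableD)
  have EBs: "E \<inter> ball a r \<in> sets lebesgue" using E Bs by auto
  have Bfin: "emeasure lebesgue (ball a r) < top" using lmeasurable_ball[of a r] unfolding fmeasurable_def infinity_ennreal_def by blast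
  have EBfin: "emeasure lebesgue (E \<inter> ball a r) < top"
    by (rule le_less_trans[OF emeasure_mono Efin]) (use E in auto)
  define m where "m = measure lebesgue (E \<inter> ball a r)"
  have em: "emeasure lebesgue (E \<inter> ball a r) = ennreal m"
    unfolding m_def using EBfin by (simp add: emeasure_eq_ennreal_measure)
  have m0: "m \<ge> 0" by (simp add: m_def)
  have mV: "m \<le> V" unfolding m_def V_def
    by (rule measure_mono_fmeasurable[OF _ EBs lmeasurable_ball]) blast
  have mE: "m \<le> measure lebesgue E" unfolding m_def
  proof (rule measure_mono_fmeasurable[OF _ EBs])
    show "E \<in> lmeasurable" unfolding fmeasurable_def infinity_ennreal_def using E Efin by blast
  qed blast
  have integ: "(\<integral>\<^sup>+ x \<in> ball a r. ennreal (\<Phi> (\<bar>indicator E x\<bar> / l)) \<partial>lebesgue) = ennreal (\<Phi> (1/l) * m)" if "l > 0" for l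
    using ind_integral[OF E Bs, of l] em phi_nonneg[OF Y, of "1/l"] that m0 by (simp add: ennreal_mult)
  show "ennreal (measure lebesgue (ball a r) powr (1 / p)) * orlicz_ball_norm \<Phi> (indicator E) (ball a r)
        \<le> ennreal (c * measure lebesgue E powr (1 / p))"
  proof (cases "m = 0")
    case True
    have nl: "orlicz_ball_norm \<Phi> (indicator E) (ball a r) \<le> ennreal l" if l: "l > 0" for l
    proof (rule norm_le_I[OF l])
      show "(\<integral>\<^sup>+ x \<in> ball a r. ennreal (\<Phi> (\<bar>indicator E x\<bar> / l)) \<partial>lebesgue) / ennreal (measure lebesgue (ball a r)) \<le> 1"
        unfolding integ[OF l] True by simp
    qed
    have "orlicz_ball_norm \<Phi> (indicator E) (ball a r) \<le> 0"
    proof (rule ennreal_le_epsilon)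
      fix e :: real assume "0 < e"
      then show "orlicz_ball_norm \<Phi> (indicator E) (ball a r) \<le> 0 + ennreal e" using nl[of e] by simp
    qed
    then have "orlicz_ball_norm \<Phi> (indicator E) (ball a r) = 0" by (simp only: le_zero_eq)
    then show ?thesis by simp
  next
    case False
    then have m: "0 < m" using m0 by simp
    define l where "l = max ((c * (m / V)) powr (1/p)) (c * (m / V))"
    have lpos: "l > 0" unfolding l_def by (rule ind_real(1)[OF c1 p1 m mV mE])
    have lb: "V powr (1/p) * l \<le> c * measure lebesgue E powr (1/p)"
      unfolding l_def by (rule ind_real(2)[OF c1 p1 m mV mE])
    have l1: "l \<le> 1 \<Longrightarrow> c * m \<le> l powr p * V"
      unfolding l_def by (rule ind_real(3)[OF c1 p1 m mV mE])
    have l2: "c * m \<le> l * V"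
      unfolding l_def by (rule ind_real(4)[OF c1 p1 m mV mE])
    have key: "\<Phi> (1/l) * m \<le> V"
    proof (cases "l \<le> 1")
      case True
      have "1 \<le> 1/l" using True lpos by simp
      then have "\<Phi> (1/l) \<le> c * (1/l) powr p" by (rule growth)
      also have "\<dots> = c / l powr p" using lpos by (simp add: powr_divide)
      finally have "\<Phi> (1/l) * m \<le> c / l powr p * m" using m by (intro mult_right_mono) auto
      also have "\<dots> \<le> V" using l1[OF True] lpos by (simp add: field_simps)
      finally show ?thesis .
    next
      case False
      have a: "\<Phi> ((1/l) * 1) \<le> (1/l) * \<Phi> 1" using False by (intro phi_scale[OF Y]) auto
      have b: "\<Phi> 1 \<le> c" using growth[of 1] by simp
      have "\<Phi> (1/l) \<le> c / l" using a mult_left_mono[OF b, of "1/l"] lpos by simp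
      then have "\<Phi> (1/l) * m \<le> c / l * m" using m by (intro mult_right_mono) auto
      also have "\<dots> \<le> V" using l2 lpos by (simp add: field_simps)
      finally show ?thesis .
    qed
    have "orlicz_ball_norm \<Phi> (indicator E) (ball a r) \<le> ennreal l"
    proof (rule norm_le_I[OF lpos])
      have "(\<integral>\<^sup>+ x \<in> ball a r. ennreal (\<Phi> (\<bar>indicator E x\<bar> / l)) \<partial>lebesgue) / ennreal V \<le> 1"
        unfolding avg_le_iff[OF V] integ[OF lpos] by (rule ennreal_leI[OF key])
      then show "(\<integral>\<^sup>+ x \<in> ball a r. ennreal (\<Phi> (\<bar>indicator E x\<bar> / l)) \<partial>lebesgue) / ennreal (measure lebesgue (ball a r)) \<le> 1"
        by (simp only: V_def)
    qed
    then have "ennreal (V powr (1 / p)) * orlicz_ball_norm \<Phi> (indicator E) (ball a r) \<le> ennreal (V powr (1 / p)) * ennreal l"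
      by (rule mult_left_mono) simp
    also have "\<dots> = ennreal (V powr (1/p) * l)" using lpos by (simp add: ennreal_mult)
    also have "\<dots> \<le> ennreal (c * measure lebesgue E powr (1/p))" using lb by (rule ennreal_leI)
    finally show ?thesis by (simp add: V_def)
  qed
qed

lemma NI_space:
  fixes E :: "(real^'n) set"
  assumes E: "E \<in> sets lebesgue" and Efin: "emeasure lebesgue E < top"
  shows "indicator E \<in> SP"
  using NI[OF E Efin] E unfolding morrey_orlicz_space_def
  by (auto intro: le_less_trans borel_measurable_indicator)

end




lemma LBI:
  assumes Y: "young_function \<Phi>" and T: "T > 0" "\<Phi> T > 0" and \<beta>: "\<beta> > 0" "\<beta> * T \<le> 1"
    and F: "F \<in> sets lebesgue" and B: "B \<in> sets lebesgue" and V: "0 < measure lebesgue B"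
    and lt: "orlicz_ball_norm \<Phi> (indicator F) B < ennreal \<beta>"
  shows "emeasure lebesgue (F \<inter> B) \<le> ennreal (measure lebesgue B * (\<beta> * T) / \<Phi> T)"
proof -
  define k where "k = \<Phi> T / (\<beta> * T)"
  have k: "k > 0" using T \<beta> by (simp add: k_def)
  have "(\<integral>\<^sup>+ x \<in> B. ennreal (\<Phi> (\<bar>indicator F x\<bar> / \<beta>)) \<partial>lebesgue) / ennreal (measure lebesgue B) \<le> 1"
    by (rule norm_lt_D[OF Y lt])
  then have I: "(\<integral>\<^sup>+ x \<in> B. ennreal (\<Phi> (\<bar>indicator F x\<bar> / \<beta>)) \<partial>lebesgue) \<le> ennreal (measure lebesgue B)"
    by (simp only: avg_le_iff[OF V])
  have pt: "\<Phi> T / (\<beta> * T) \<le> \<Phi> (1 / \<beta>)"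
  proof -
    have "\<Phi> ((\<beta> * T) * (1 / \<beta>)) \<le> (\<beta> * T) * \<Phi> (1 / \<beta>)"
      using \<beta> T by (intro phi_scale[OF Y]) auto
    then have "\<Phi> T \<le> (\<beta> * T) * \<Phi> (1 / \<beta>)" using \<beta> by simp
    then show ?thesis using \<beta> T by (simp add: divide_le_eq mult.commute)
  qed
  have "ennreal k * emeasure lebesgue (F \<inter> B) = (\<integral>\<^sup>+ x. ennreal k * indicator (F \<inter> B) x \<partial>lebesgue)"
    using F B by (simp add: nn_integral_cmult_indicator)
  also have "\<dots> \<le> (\<integral>\<^sup>+ x \<in> B. ennreal (\<Phi> (\<bar>indicator F x\<bar> / \<beta>)) \<partial>lebesgue)"
  proof (rule nn_integral_mono)
    fix x
    show "ennreal k * indicator (F \<inter> B) x \<le> ennreal (\<Phi> (\<bar>indicator F x\<bar> / \<beta>)) * indicator B x"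
      using pt by (auto simp: indicator_def k_def intro: ennreal_leI)
  qed
  also have "\<dots> \<le> ennreal (measure lebesgue B)" by (rule I)
  finally have "emeasure lebesgue (F \<inter> B) \<le> ennreal (measure lebesgue B / k)"
    by (rule ennreal_mult_le_div[OF k])
  also have "measure lebesgue B / k = measure lebesgue B * (\<beta> * T) / \<Phi> T"
    using T \<beta> by (simp add: k_def)
  finally show ?thesis .
qed


context MO
begin

lemma small:
  fixes a x0 :: "real^'n"
  assumes r: "r > 0" and e: "\<epsilon> > 0"
  obtains \<eta> where "\<eta> > 0"
    "\<And>E t. E \<in> sets lebesgue \<Longrightarrow> emeasure lebesgue E < ennreal \<eta> \<Longrightarrow> t > 0 \<Longrightarrow>
        {z. (1/t) *\<^sub>R (\<psi> (x0 + t *\<^sub>R z) - \<psi> x0) \<in> E} \<in> sets lebesgue \<Longrightarrow>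
        emeasure lebesgue ({z. (1/t) *\<^sub>R (\<psi> (x0 + t *\<^sub>R z) - \<psi> x0) \<in> E} \<inter> ball a r) \<le> ennreal \<epsilon>"
proof -
  obtain T where T: "T > 0" "\<Phi> T > 0" using phi_big[OF Y] by blast
  define V where "V = measure lebesgue (ball a r)"
  have V: "V > 0" unfolding V_def by (rule ball_measure_pos[OF r])
  define \<beta> where "\<beta> = min (1/T) (\<epsilon> * \<Phi> T / (T * V))"
  have \<beta>: "\<beta> > 0" using T V e by (simp add: \<beta>_def)
  have \<beta>T: "\<beta> * T \<le> 1"
  proof -
    have "\<beta> \<le> 1/T" by (simp add: \<beta>_def)
    then show ?thesis using T by (simp add: field_simps)
  qed
  have \<beta>e: "V * (\<beta> * T) / \<Phi> T \<le> \<epsilon>"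
  proof -
    have "\<beta> \<le> \<epsilon> * \<Phi> T / (T * V)" by (simp add: \<beta>_def)
    then have "\<beta> * (T * V) \<le> \<epsilon> * \<Phi> T" using T V by (simp add: field_simps)
    then show ?thesis using T V by (simp add: field_simps)
  qed
  define Vp where "Vp = V powr (1/p)"
  have Vp: "Vp > 0" using V by (simp add: Vp_def)
  define \<eta> where "\<eta> = (Vp * \<beta> / (2 * K * c)) powr p"
  have q: "Vp * \<beta> / (2 * K * c) > 0" using Vp \<beta> Kpos c1 by simp
  have \<eta>: "\<eta> > 0" using q unfolding \<eta>_def by (rule powr_gt_zero[THEN iffD2, OF less_imp_neq[symmetric]])
  have \<eta>p: "\<eta> powr (1/p) = Vp * \<beta> / (2 * K * c)"
    using q p1 Vp \<beta> Kpos c1 by (simp add: \<eta>_def powr_powr)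
  show ?thesis
  proof (rule that[OF \<eta>])
    fix E :: "(real^'n) set" and t :: real
    assume E: "E \<in> sets lebesgue" and Eless: "emeasure lebesgue E < ennreal \<eta>" and t: "t > 0"
      and Fm: "{z. (1/t) *\<^sub>R (\<psi> (x0 + t *\<^sub>R z) - \<psi> x0) \<in> E} \<in> sets lebesgue"
    define F where "F = {z. (1/t) *\<^sub>R (\<psi> (x0 + t *\<^sub>R z) - \<psi> x0) \<in> E}"
    have Efin: "emeasure lebesgue E < top" using Eless by (meson ennreal_less_top order.strict_trans)
    define mE where "mE = measure lebesgue E"
    have emE: "emeasure lebesgue E = ennreal mE"
      unfolding mE_def using Efin by (simp add: emeasure_eq_ennreal_measure)
    have mE0: "mE \<ge> 0" by (simp add: mE_def)
    have mEl: "mE < \<eta>" using Eless emE mE0 by (simp add: ennreal_less_iff)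
    have pw: "mE powr (1/p) < \<eta> powr (1/p)"
    proof (cases "mE = 0")
      case True then show ?thesis using \<eta> by simp
    next
      case False then show ?thesis using mE0 mEl p1 by (intro powr_less_mono2) auto
    qed
    have iS: "indicator E \<in> SP" by (rule NI_space[OF E Efin])
    have "ennreal Vp * orlicz_ball_norm \<Phi> (\<lambda>z. indicator E ((1/t) *\<^sub>R (\<psi> (x0 + t *\<^sub>R z) - \<psi> x0))) (ball a r)
        \<le> ennreal K * N (indicator E)"
      unfolding Vp_def V_def by (rule chain[OF iS t r])
    also have "\<dots> \<le> ennreal K * ennreal (c * mE powr (1/p))"
      by (intro mult_left_mono NI[OF E Efin, folded mE_def]) simp
    also have "\<dots> = ennreal (K * (c * mE powr (1/p)))"
      using Kpos c1 by (simp add: ennreal_mult)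
    also have "\<dots> < ennreal (Vp * \<beta>)"
    proof -
      have "K * (c * mE powr (1/p)) < K * (c * (Vp * \<beta> / (2 * K * c)))"
        using pw \<eta>p Kpos c1 by (intro mult_strict_left_mono) auto
      also have "\<dots> = Vp * \<beta> / 2" using Kpos c1 by (simp add: field_simps)
      also have "\<dots> < Vp * \<beta>" using Vp \<beta> by simp
      finally show ?thesis using Vp \<beta> by (intro ennreal_lessI) auto
    qed
    also have "\<dots> = ennreal Vp * ennreal \<beta>" using Vp \<beta> by (simp add: ennreal_mult)
    finally have lt0: "ennreal Vp * orlicz_ball_norm \<Phi> (\<lambda>z. indicator E ((1/t) *\<^sub>R (\<psi> (x0 + t *\<^sub>R z) - \<psi> x0))) (ball a r)
        < ennreal Vp * ennreal \<beta>" .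
    have ind: "(\<lambda>z. indicator E ((1/t) *\<^sub>R (\<psi> (x0 + t *\<^sub>R z) - \<psi> x0)) :: real) = indicator F"
      by (auto simp: F_def indicator_def)
    have lt: "orlicz_ball_norm \<Phi> (indicator F) (ball a r) < ennreal \<beta>"
    proof (rule ccontr)
      assume "\<not> ?thesis"
      then have "ennreal \<beta> \<le> orlicz_ball_norm \<Phi> (indicator F) (ball a r)" by simp
      then have "ennreal Vp * ennreal \<beta> \<le> ennreal Vp * orlicz_ball_norm \<Phi> (indicator F) (ball a r)"
        by (rule mult_left_mono) simp
      then show False using lt0 unfolding ind by simp
    qed
    have "emeasure lebesgue (F \<inter> ball a r) \<le> ennreal (V * (\<beta> * T) / \<Phi> T)"
      unfolding V_def
      by (rule LBI[OF Y T \<beta> \<beta>T _ _ _ lt]) (use Fm V in \<open>simp_all add: F_def V_def lmeasurable_ball fmeasurableD\<close>)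
    also have "\<dots> \<le> ennreal \<epsilon>" using \<beta>e by (rule ennreal_leI)
    finally show "emeasure lebesgue ({z. (1/t) *\<^sub>R (\<psi> (x0 + t *\<^sub>R z) - \<psi> x0) \<in> E} \<inter> ball a r) \<le> ennreal \<epsilon>"
      by (simp only: F_def)
  qed
qed

end




locale MOx = MO \<Phi> p \<psi> K c
  for \<Phi> :: "real \<Rightarrow> real" and p :: real and \<psi> :: "real^'n \<Rightarrow> real^'n" and K :: real and c :: real +
  fixes x0 :: "real^'n"
begin

definition tt :: "nat \<Rightarrow> real" where "tt k = 1 / (real k + 1)"
definition phi :: "nat \<Rightarrow> real^'n \<Rightarrow> real^'n"
  where "phi k z = (1 / tt k) *\<^sub>R (\<psi> (x0 + tt k *\<^sub>R z) - \<psi> x0)"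
definition LA :: "real^'n \<Rightarrow> real^'n" where "LA z = jacobian \<psi> (at x0) *v z"

lemma tt_pos: "tt k > 0" by (simp add: tt_def)

lemma tt_lim: "tt \<longlonglongrightarrow> 0"
  unfolding tt_def[abs_def]
  using LIMSEQ_inverse_real_of_nat by (simp add: inverse_eq_divide add.commute)

lemma bijpsi: "bij \<psi>" using diffeo by (simp add: diffeomorphism_def)

lemma psi_inv1 [simp]: "inv \<psi> (\<psi> x) = x" using bijpsi by (simp add: bij_is_inj inv_f_f)
lemma psi_inv2 [simp]: "\<psi> (inv \<psi> y) = y" using bijpsi by (simp add: bij_is_surj surj_f_inv_f)

lemma psi_diff: "\<psi> differentiable at x" using diffeo by (simp add: diffeomorphism_def)
lemma psiinv_diff: "inv \<psi> differentiable at y" using diffeo by (simp add: diffeomorphism_def)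

lemma deriv_x0: "(\<psi> has_derivative LA) (at x0)"
  using psi_diff[of x0] unfolding jacobian_works LA_def[abs_def] .

lemma LA_linear: "linear LA"
  using deriv_x0 has_derivative_linear by blast

lemma phi_conv: "(\<lambda>k. phi k z) \<longlonglongrightarrow> LA z"
proof (cases "z = 0")
  case True
  have "LA 0 = 0" using LA_linear linear_0 by blast
  then show ?thesis using True by (simp add: phi_def)
next
  case False
  define Q where "Q = (\<lambda>h. norm (\<psi> (x0 + h) - \<psi> x0 - LA h) / norm h)"
  have Q: "(Q \<longlongrightarrow> 0) (at 0)"
    using deriv_x0 unfolding has_derivative_at Q_def by blast
  have h: "filterlim (\<lambda>k. tt k *\<^sub>R z) (at 0) sequentially"
  proof (rule filterlim_atI)
    show "((\<lambda>k. tt k *\<^sub>R z) \<longlongrightarrow> 0) sequentially"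
      using tendsto_scaleR[OF tt_lim tendsto_const[of z]] by simp
    show "eventually (\<lambda>k. tt k *\<^sub>R z \<noteq> 0) sequentially"
      using False tt_pos by (simp add: less_imp_neq[symmetric])
  qed
  have Qk: "((\<lambda>k. Q (tt k *\<^sub>R z)) \<longlongrightarrow> 0) sequentially"
    by (rule filterlim_compose[OF Q h])
  have eq: "norm (phi k z - LA z) = norm z * Q (tt k *\<^sub>R z)" for k
  proof -
    have t: "tt k > 0" by (rule tt_pos)
    define W where "W = \<psi> (x0 + tt k *\<^sub>R z) - \<psi> x0 - LA (tt k *\<^sub>R z)"
    have "LA (tt k *\<^sub>R z) = tt k *\<^sub>R LA z" using LA_linear by (simp add: linear_scale)
    then have d: "phi k z - LA z = (1 / tt k) *\<^sub>R W"
      using t by (simp add: phi_def W_def algebra_simps)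
    have n1: "norm (phi k z - LA z) = norm W / tt k" using t unfolding d by simp
    have n2: "norm z * Q (tt k *\<^sub>R z) = norm W / tt k"
      using t False by (simp add: Q_def W_def)
    show ?thesis using n1 n2 by simp
  qed
  have "((\<lambda>k. norm (phi k z - LA z)) \<longlongrightarrow> 0) sequentially"
    unfolding eq using tendsto_mult[OF tendsto_const[of "norm z"] Qk] by simp
  then show ?thesis
    by (simp add: tendsto_norm_zero_iff LIM_zero_iff)
qed

lemma phi_meas: "phi k \<in> lebesgue \<rightarrow>\<^sub>M lebesgue"
proof -
  define t where "t = tt k"
  have t: "t > 0" using tt_pos by (simp add: t_def)
  define g where "g = (\<lambda>y. (1 / t) *\<^sub>R (inv \<psi> (\<psi> x0 + t *\<^sub>R y) - x0))"
  show ?thesis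
  proof (rule meas_by_inverse[where h=g])
    show "g (phi k z) = z" for z using t by (simp add: g_def phi_def t_def)
    show "phi k (g y) = y" for y using t by (simp add: g_def phi_def t_def)
    show "g differentiable at y" for y
    proof -
      have "(\<lambda>y. \<psi> x0 + t *\<^sub>R y) differentiable at y" by simp
      moreover have "inv \<psi> differentiable at (\<psi> x0 + t *\<^sub>R y)" by (rule psiinv_diff)
      ultimately have "(inv \<psi> \<circ> (\<lambda>y. \<psi> x0 + t *\<^sub>R y)) differentiable at y"
        by (rule differentiable_chain_at)
      moreover have "(\<lambda>w. (1 / t) *\<^sub>R (w - x0)) differentiable at ((inv \<psi> \<circ> (\<lambda>y. \<psi> x0 + t *\<^sub>R y)) y)" by simp
      ultimately have "((\<lambda>w. (1 / t) *\<^sub>R (w - x0)) \<circ> (inv \<psi> \<circ> (\<lambda>y. \<psi> x0 + t *\<^sub>R y))) differentiable at y"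
        by (rule differentiable_chain_at)
      then show ?thesis by (simp add: g_def o_def)
    qed
  qed
qed

lemma LA_meas: "LA \<in> lebesgue \<rightarrow>\<^sub>M lebesgue"
proof -
  define D where "D = frechet_derivative (inv \<psi>) (at (\<psi> x0))"
  have dD: "(inv \<psi> has_derivative D) (at (\<psi> x0))"
    using psiinv_diff[of "\<psi> x0"] unfolding D_def frechet_derivative_works .
  have "((\<psi> \<circ> inv \<psi>) has_derivative (LA \<circ> D)) (at (\<psi> x0))"
    by (rule diff_chain_at[OF dD]) (use deriv_x0 in simp)
  moreover have "((\<psi> \<circ> inv \<psi>) has_derivative id) (at (\<psi> x0))"
  proof -
    have "(\<psi> \<circ> inv \<psi>) = id" by (auto simp: o_def)
    then show ?thesis by (simp add: has_derivative_ident id_def)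
  qed
  ultimately have comp: "LA \<circ> D = id" by (rule has_derivative_unique)
  then have LD: "LA (D y) = y" for y by (metis comp_apply id_apply)
  have "surj LA" using LD by (metis surjI)
  then have "inj LA" using LA_linear linear_surj_imp_inj by blast
  then have DL: "D (LA z) = z" for z using LD by (metis injD)
  have Dlin: "bounded_linear D" using dD has_derivative_bounded_linear by blast
  show ?thesis
  proof (rule meas_by_inverse[where h=D])
    show "D (LA z) = z" for z by (rule DL)
    show "LA (D y) = y" for y by (rule LD)
    show "D differentiable at y" for y by (rule bounded_linear_imp_differentiable[OF Dlin])
  qed
qed

lemma pre_sets:
  assumes "g \<in> lebesgue \<rightarrow>\<^sub>M lebesgue" "S \<in> sets lebesgue"
  shows "{z. g z \<in> S} \<in> sets lebesgue"
  using measurable_sets[OF assms] by (simp add: vimage_def)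

end




lemma liminf_add_ge:
  fixes a b :: "nat \<Rightarrow> ennreal"
  shows "liminf a + liminf b \<le> liminf (\<lambda>k. a k + b k)"
proof -
  have ia: "incseq (\<lambda>n. INF m\<in>{n..}. a m)"
    by (intro monoI INF_superset_mono) auto
  have ib: "incseq (\<lambda>n. INF m\<in>{n..}. b m)"
    by (intro monoI INF_superset_mono) auto
  have "liminf a + liminf b = (SUP n. (INF m\<in>{n..}. a m) + (INF m\<in>{n..}. b m))"
    unfolding liminf_SUP_INF by (rule ennreal_SUP_add[OF ia ib, symmetric])
  also have "\<dots> \<le> (SUP n. INF m\<in>{n..}. a m + b m)"
    by (intro SUP_subset_mono[OF order_refl] INF_greatest) (auto intro!: add_mono INF_lower)
  also have "\<dots> = liminf (\<lambda>k. a k + b k)" by (simp add: liminf_SUP_INF)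
  finally show ?thesis .
qed

lemma liminf_cmult_ge:
  fixes a :: "nat \<Rightarrow> ennreal"
  shows "c * liminf a \<le> liminf (\<lambda>k. c * a k)"
proof -
  have "c * liminf a = (SUP n. c * (INF m\<in>{n..}. a m))"
    unfolding liminf_SUP_INF by (rule SUP_mult_left_ennreal)
  also have "\<dots> \<le> (SUP n. INF m\<in>{n..}. c * a m)"
    by (intro SUP_subset_mono[OF order_refl] INF_greatest) (auto intro!: mult_left_mono INF_lower)
  also have "\<dots> = liminf (\<lambda>k. c * a k)" by (simp add: liminf_SUP_INF)
  finally show ?thesis .
qed

context MOx
begin

lemma open_case:
  assumes U: "open U" and B: "B \<in> sets lebesgue"
  shows "emeasure lebesgue ({z. LA z \<in> U} \<inter> B) \<le> liminf (\<lambda>k. emeasure lebesgue ({z. phi k z \<in> U} \<inter> B))"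
proof -
  have Us: "U \<in> sets lebesgue" using U by simp
  have S0: "{z. LA z \<in> U} \<inter> B \<in> sets lebesgue" using pre_sets[OF LA_meas Us] B by auto
  have Sk: "{z. phi k z \<in> U} \<inter> B \<in> sets lebesgue" for k using pre_sets[OF phi_meas Us] B by auto
  have "emeasure lebesgue ({z. LA z \<in> U} \<inter> B) = (\<integral>\<^sup>+ z. indicator ({z. LA z \<in> U} \<inter> B) z \<partial>lebesgue)"
    using S0 by simp
  also have "\<dots> \<le> (\<integral>\<^sup>+ z. liminf (\<lambda>k. indicator ({z. phi k z \<in> U} \<inter> B) z) \<partial>lebesgue)"
  proof (rule nn_integral_mono)
    fix z
    show "indicator ({z. LA z \<in> U} \<inter> B) z \<le> liminf (\<lambda>k. indicator ({z. phi k z \<in> U} \<inter> B) z :: ennreal)"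
    proof (cases "z \<in> {z. LA z \<in> U} \<inter> B")
      case True
      then have "eventually (\<lambda>k. phi k z \<in> U) sequentially"
        using topological_tendstoD[OF phi_conv U] by auto
      then have "eventually (\<lambda>k. 1 \<le> (indicator ({z. phi k z \<in> U} \<inter> B) z :: ennreal)) sequentially"
        by eventually_elim (use True in auto)
      then have "1 \<le> liminf (\<lambda>k. indicator ({z. phi k z \<in> U} \<inter> B) z :: ennreal)"
        by (rule Liminf_bounded)
      then show ?thesis using True by simp
    qed simp
  qed
  also have "\<dots> \<le> liminf (\<lambda>k. \<integral>\<^sup>+ z. indicator ({z. phi k z \<in> U} \<inter> B) z \<partial>lebesgue)"
    by (rule nn_integral_liminf) (use Sk in auto)
  also have "\<dots> = liminf (\<lambda>k. emeasure lebesgue ({z. phi k z \<in> U} \<inter> B))"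
    using Sk by simp
  finally show ?thesis .
qed

lemma set_case:
  assumes S: "S \<in> sets lebesgue" and r: "r > 0"
  shows "emeasure lebesgue ({z. LA z \<in> S} \<inter> ball a r) \<le> liminf (\<lambda>k. emeasure lebesgue ({z. phi k z \<in> S} \<inter> ball a r))"
proof (rule ennreal_le_epsilon)
  fix \<epsilon> :: real assume e: "0 < \<epsilon>"
  have Bs: "ball a r \<in> sets lebesgue" by simp
  obtain \<eta> where \<eta>: "\<eta> > 0" and sm: "\<And>(E::(real^'n) set) (t::real). E \<in> sets lebesgue \<Longrightarrow> emeasure lebesgue E < ennreal \<eta> \<Longrightarrow> t > 0 \<Longrightarrow>
        {z. (1/t) *\<^sub>R (\<psi> (x0 + t *\<^sub>R z) - \<psi> x0) \<in> E} \<in> sets lebesgue \<Longrightarrow>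
        emeasure lebesgue ({z. (1/t) *\<^sub>R (\<psi> (x0 + t *\<^sub>R z) - \<psi> x0) \<in> E} \<inter> ball a r) \<le> ennreal \<epsilon>"
    by (rule small[OF r e, of x0 a]) blast
  obtain U where U: "open U" "S \<subseteq> U" "U - S \<in> lmeasurable" "emeasure lebesgue (U - S) < ennreal \<eta>"
    by (rule sets_lebesgue_outer_open[OF S \<eta>])
  have USs: "U - S \<in> sets lebesgue" using U(3) by (simp add: fmeasurableD)
  have Us: "U \<in> sets lebesgue" using U(1) by simp
  have k_bound: "emeasure lebesgue ({z. phi k z \<in> U} \<inter> ball a r)
      \<le> emeasure lebesgue ({z. phi k z \<in> S} \<inter> ball a r) + ennreal \<epsilon>" for k
  proof -
    have s1: "{z. phi k z \<in> S} \<inter> ball a r \<in> sets lebesgue" using pre_sets[OF phi_meas S] Bs by auto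
    have s2: "{z. phi k z \<in> U - S} \<inter> ball a r \<in> sets lebesgue" using pre_sets[OF phi_meas USs] Bs by auto
    have "emeasure lebesgue ({z. phi k z \<in> U} \<inter> ball a r)
        \<le> emeasure lebesgue (({z. phi k z \<in> S} \<inter> ball a r) \<union> ({z. phi k z \<in> U - S} \<inter> ball a r))"
      by (rule emeasure_mono) (use s1 s2 in auto)
    also have "\<dots> \<le> emeasure lebesgue ({z. phi k z \<in> S} \<inter> ball a r) + emeasure lebesgue ({z. phi k z \<in> U - S} \<inter> ball a r)"
      by (rule emeasure_subadditive[OF s1 s2])
    also have "emeasure lebesgue ({z. phi k z \<in> U - S} \<inter> ball a r) \<le> ennreal \<epsilon>"
      using sm[OF USs U(4) tt_pos] pre_sets[OF phi_meas USs] by (simp add: phi_def)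
    finally show ?thesis by (simp add: add_left_mono)
  qed
  have "emeasure lebesgue ({z. LA z \<in> S} \<inter> ball a r) \<le> emeasure lebesgue ({z. LA z \<in> U} \<inter> ball a r)"
    by (rule emeasure_mono) (use U(2) pre_sets[OF LA_meas Us] in auto)
  also have "\<dots> \<le> liminf (\<lambda>k. emeasure lebesgue ({z. phi k z \<in> U} \<inter> ball a r))"
    by (rule open_case[OF U(1) Bs])
  also have "\<dots> \<le> liminf (\<lambda>k. emeasure lebesgue ({z. phi k z \<in> S} \<inter> ball a r) + ennreal \<epsilon>)"
    by (intro Liminf_mono always_eventually allI k_bound)
  also have "\<dots> = liminf (\<lambda>k. emeasure lebesgue ({z. phi k z \<in> S} \<inter> ball a r)) + ennreal \<epsilon>"
    by (rule Liminf_add_const) simp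
  finally show "emeasure lebesgue ({z. LA z \<in> S} \<inter> ball a r)
      \<le> liminf (\<lambda>k. emeasure lebesgue ({z. phi k z \<in> S} \<inter> ball a r)) + ennreal \<epsilon>" .
qed

end




lemma meas_ball_ind:
  "f \<in> borel_measurable lebesgue \<Longrightarrow> (\<lambda>z. f z * indicator (ball a r) z :: ennreal) \<in> borel_measurable lebesgue"
  by (intro borel_measurable_times_ennreal borel_measurable_indicator) simp_all

context MOx
begin

lemma GL:
  fixes G :: "real^'n \<Rightarrow> ennreal" and a :: "real^'n"
  assumes G: "G \<in> borel_measurable lebesgue" and r: "r > 0"
  shows "(\<integral>\<^sup>+ z \<in> ball a r. G (LA z) \<partial>lebesgue) \<le> liminf (\<lambda>k. \<integral>\<^sup>+ z \<in> ball a r. G (phi k z) \<partial>lebesgue)"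
  using G
proof (induct rule: borel_measurable_induct)
  case (cong f g)
  then have "f = g" by auto
  then show ?case using cong by simp
next
  case (set S)
  have Bs: "ball a r \<in> sets lebesgue" by simp
  have s0: "{z. LA z \<in> S} \<inter> ball a r \<in> sets lebesgue" using pre_sets[OF LA_meas set] Bs by auto
  have sk: "{z. phi k z \<in> S} \<inter> ball a r \<in> sets lebesgue" for k using pre_sets[OF phi_meas set] Bs by auto
  have e0: "(\<integral>\<^sup>+ z \<in> ball a r. indicator S (LA z) \<partial>lebesgue) = emeasure lebesgue ({z. LA z \<in> S} \<inter> ball a r)"
  proof -
    have "(\<lambda>z. indicator S (LA z) * indicator (ball a r) z :: ennreal) = indicator ({z. LA z \<in> S} \<inter> ball a r)"
      by (auto simp: indicator_def)
    then show ?thesis using s0 by simp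
  qed
  have ek: "(\<integral>\<^sup>+ z \<in> ball a r. indicator S (phi k z) \<partial>lebesgue) = emeasure lebesgue ({z. phi k z \<in> S} \<inter> ball a r)" for k
  proof -
    have "(\<lambda>z. indicator S (phi k z) * indicator (ball a r) z :: ennreal) = indicator ({z. phi k z \<in> S} \<inter> ball a r)"
      by (auto simp: indicator_def)
    then show ?thesis using sk[of k] by simp
  qed
  show ?case unfolding e0 ek by (rule set_case[OF set r])
next
  case (mult u c')
  have m0: "(\<lambda>z. u (LA z) * indicator (ball a r) z) \<in> borel_measurable lebesgue"
    using meas_ball_ind[OF measurable_comp[OF LA_meas mult(2)]] by (simp add: o_def)
  have mk: "(\<lambda>z. u (phi k z) * indicator (ball a r) z) \<in> borel_measurable lebesgue" for k
    using meas_ball_ind[OF measurable_comp[OF phi_meas mult(2)]] by (simp add: o_def)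
  have "(\<integral>\<^sup>+ z \<in> ball a r. c' * u (LA z) \<partial>lebesgue) = c' * (\<integral>\<^sup>+ z \<in> ball a r. u (LA z) \<partial>lebesgue)"
    using nn_integral_cmult[OF m0, of c'] by (simp add: mult.assoc)
  also have "\<dots> \<le> c' * liminf (\<lambda>k. \<integral>\<^sup>+ z \<in> ball a r. u (phi k z) \<partial>lebesgue)"
    by (rule mult_left_mono[OF mult(4)]) simp
  also have "\<dots> \<le> liminf (\<lambda>k. c' * (\<integral>\<^sup>+ z \<in> ball a r. u (phi k z) \<partial>lebesgue))"
    by (rule liminf_cmult_ge)
  also have "\<dots> = liminf (\<lambda>k. \<integral>\<^sup>+ z \<in> ball a r. c' * u (phi k z) \<partial>lebesgue)"
    using nn_integral_cmult[OF mk, of c'] by (simp add: mult.assoc)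
  finally show ?case .
next
  case (add u v)
  have mu0: "(\<lambda>z. u (LA z) * indicator (ball a r) z) \<in> borel_measurable lebesgue"
    using meas_ball_ind[OF measurable_comp[OF LA_meas add(1)]] by (simp add: o_def)
  have mv0: "(\<lambda>z. v (LA z) * indicator (ball a r) z) \<in> borel_measurable lebesgue"
    using meas_ball_ind[OF measurable_comp[OF LA_meas add(4)]] by (simp add: o_def)
  have muk: "(\<lambda>z. u (phi k z) * indicator (ball a r) z) \<in> borel_measurable lebesgue" for k
    using meas_ball_ind[OF measurable_comp[OF phi_meas add(1)]] by (simp add: o_def)
  have mvk: "(\<lambda>z. v (phi k z) * indicator (ball a r) z) \<in> borel_measurable lebesgue" for k
    using meas_ball_ind[OF measurable_comp[OF phi_meas add(4)]] by (simp add: o_def)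
  have "(\<integral>\<^sup>+ z \<in> ball a r. v (LA z) + u (LA z) \<partial>lebesgue)
      = (\<integral>\<^sup>+ z \<in> ball a r. v (LA z) \<partial>lebesgue) + (\<integral>\<^sup>+ z \<in> ball a r. u (LA z) \<partial>lebesgue)"
    using nn_integral_add[OF mv0 mu0] by (simp add: distrib_right)
  also have "\<dots> \<le> liminf (\<lambda>k. \<integral>\<^sup>+ z \<in> ball a r. v (phi k z) \<partial>lebesgue) + liminf (\<lambda>k. \<integral>\<^sup>+ z \<in> ball a r. u (phi k z) \<partial>lebesgue)"
    by (rule add_mono[OF add(7) add(3)])
  also have "\<dots> \<le> liminf (\<lambda>k. (\<integral>\<^sup>+ z \<in> ball a r. v (phi k z) \<partial>lebesgue) + (\<integral>\<^sup>+ z \<in> ball a r. u (phi k z) \<partial>lebesgue))"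
    by (rule liminf_add_ge)
  also have "\<dots> = liminf (\<lambda>k. \<integral>\<^sup>+ z \<in> ball a r. v (phi k z) + u (phi k z) \<partial>lebesgue)"
    using nn_integral_add[OF mvk muk] by (simp add: distrib_right)
  finally show ?case .
next
  case (seq U)
  have m0: "(\<lambda>z. U i (LA z) * indicator (ball a r) z) \<in> borel_measurable lebesgue" for i
    using meas_ball_ind[OF measurable_comp[OF LA_meas seq(1)]] by (simp add: o_def)
  have inc: "incseq (\<lambda>i z. U i (LA z) * indicator (ball a r) z)"
    using seq(4) by (auto simp: incseq_def le_fun_def intro!: mult_right_mono)
  have "(\<integral>\<^sup>+ z \<in> ball a r. (SUP i. U i) (LA z) \<partial>lebesgue) = (\<integral>\<^sup>+ z. (SUP i. U i (LA z) * indicator (ball a r) z) \<partial>lebesgue)"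
    by (simp add: SUP_mult_right_ennreal image_image)
  also have "\<dots> = (SUP i. \<integral>\<^sup>+ z \<in> ball a r. U i (LA z) \<partial>lebesgue)"
    by (rule nn_integral_monotone_convergence_SUP[OF inc m0])
  also have "\<dots> \<le> (SUP i. liminf (\<lambda>k. \<integral>\<^sup>+ z \<in> ball a r. U i (phi k z) \<partial>lebesgue))"
    by (rule SUP_mono) (use seq(3) in blast)
  also have "\<dots> \<le> liminf (\<lambda>k. \<integral>\<^sup>+ z \<in> ball a r. (SUP i. U i) (phi k z) \<partial>lebesgue)"
  proof (rule SUP_least)
    fix i
    show "liminf (\<lambda>k. \<integral>\<^sup>+ z \<in> ball a r. U i (phi k z) \<partial>lebesgue) \<le> liminf (\<lambda>k. \<integral>\<^sup>+ z \<in> ball a r. (SUP i. U i) (phi k z) \<partial>lebesgue)"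
    proof (intro Liminf_mono always_eventually allI nn_integral_mono)
      fix k z
      show "U i (phi k z) * indicator (ball a r) z \<le> (SUP i. U i) (phi k z) * indicator (ball a r) z"
        by (intro mult_right_mono) (auto intro: SUP_upper)
    qed
  qed
  finally show ?case .
qed

end




context MOx
begin

lemma main_ball:
  fixes f :: "real^'n \<Rightarrow> real" and a :: "real^'n"
  assumes f: "f \<in> SP" and r: "r > 0"
  shows "ennreal (measure lebesgue (ball a r) powr (1/p)) * orlicz_ball_norm \<Phi> (\<lambda>x. f (LA x)) (ball a r)
          \<le> ennreal K * N f"
proof -
  define V where "V = measure lebesgue (ball a r)"
  have V: "V > 0" unfolding V_def by (rule ball_measure_pos[OF r])
  define Vp where "Vp = V powr (1/p)"
  have Vp: "Vp > 0" using V by (simp add: Vp_def)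
  have Mfin: "ennreal K * N f < top"
    using space_fin[OF f] by (simp add: ennreal_mult_less_top)
  define m where "m = enn2real (ennreal K * N f)"
  have Mm: "ennreal K * N f = ennreal m" unfolding m_def using Mfin by simp
  have m0: "m \<ge> 0" by (simp add: m_def)
  have fm: "f \<in> borel_measurable lebesgue" by (rule space_meas[OF f])
  have nb: "orlicz_ball_norm \<Phi> (\<lambda>x. f (LA x)) (ball a r) \<le> ennreal (m / Vp)"
  proof (rule ennreal_le_epsilon)
    fix \<epsilon> :: real assume e: "0 < \<epsilon>"
    define l where "l = m / Vp + \<epsilon>"
    have l: "l > 0" unfolding l_def using e m0 Vp by (intro add_nonneg_pos) simp_all
    have k_int: "(\<integral>\<^sup>+ z \<in> ball a r. ennreal (\<Phi> (\<bar>f (phi k z)\<bar> / l)) \<partial>lebesgue) \<le> ennreal V" for k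
    proof -
      have "ennreal Vp * orlicz_ball_norm \<Phi> (\<lambda>z. f (phi k z)) (ball a r) \<le> ennreal K * N f"
        using chain[OF f tt_pos[of k] r, of a x0] by (simp add: phi_def[abs_def] Vp_def V_def)
      then have "ennreal Vp * orlicz_ball_norm \<Phi> (\<lambda>z. f (phi k z)) (ball a r) \<le> ennreal m"
        by (simp only: Mm)
      then have "orlicz_ball_norm \<Phi> (\<lambda>z. f (phi k z)) (ball a r) \<le> ennreal (m / Vp)"
        by (rule ennreal_mult_le_div[OF Vp])
      also have "\<dots> < ennreal l" by (rule ennreal_lessI[OF l]) (simp add: l_def e)
      finally have "(\<integral>\<^sup>+ z \<in> ball a r. ennreal (\<Phi> (\<bar>f (phi k z)\<bar> / l)) \<partial>lebesgue) / ennreal (measure lebesgue (ball a r)) \<le> 1"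
        by (rule norm_lt_D[OF Y])
      then show ?thesis unfolding V_def[symmetric] by (simp only: avg_le_iff[OF V])
    qed
    define G where "G = (\<lambda>y. ennreal (\<Phi> (\<bar>f y\<bar> / l)))"
    have Gm: "G \<in> borel_measurable lebesgue"
      unfolding G_def using Phi_comp_meas[OF Y fm l] by measurable
    have "(\<integral>\<^sup>+ z \<in> ball a r. G (LA z) \<partial>lebesgue) \<le> liminf (\<lambda>k. \<integral>\<^sup>+ z \<in> ball a r. G (phi k z) \<partial>lebesgue)"
      by (rule GL[OF Gm r])
    also have "\<dots> \<le> limsup (\<lambda>k. \<integral>\<^sup>+ z \<in> ball a r. G (phi k z) \<partial>lebesgue)"
      by (rule Liminf_le_Limsup) simp
    also have "\<dots> \<le> ennreal V"
      by (rule Limsup_bounded) (use k_int in \<open>simp add: G_def\<close>)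
    finally have "(\<integral>\<^sup>+ z \<in> ball a r. ennreal (\<Phi> (\<bar>f (LA z)\<bar> / l)) \<partial>lebesgue) / ennreal (measure lebesgue (ball a r)) \<le> 1"
      unfolding V_def[symmetric] G_def by (simp only: avg_le_iff[OF V])
    then have "orlicz_ball_norm \<Phi> (\<lambda>x. f (LA x)) (ball a r) \<le> ennreal l"
      by (rule norm_le_I[OF l])
    also have "\<dots> = ennreal (m / Vp) + ennreal \<epsilon>"
      using e m0 Vp by (simp add: l_def ennreal_plus)
    finally show "orlicz_ball_norm \<Phi> (\<lambda>x. f (LA x)) (ball a r) \<le> ennreal (m / Vp) + ennreal \<epsilon>" .
  qed
  have "ennreal Vp * orlicz_ball_norm \<Phi> (\<lambda>x. f (LA x)) (ball a r) \<le> ennreal Vp * ennreal (m / Vp)"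
    by (rule mult_left_mono[OF nb]) simp
  also have "\<dots> = ennreal m" using Vp m0 by (simp add: ennreal_mult[symmetric])
  finally show ?thesis unfolding Vp_def V_def Mm .
qed

lemma main:
  assumes f: "f \<in> SP"
  shows "N (\<lambda>x. f (LA x)) \<le> ennreal K * N f"
  by (rule morrey_le) (rule main_ball[OF f])

end

theorem corollary4p4:
  fixes \<Phi> :: "real \<Rightarrow> real" and p :: real and \<psi> :: "real^'n \<Rightarrow> real^'n"
  assumes "p \<ge> 1"
    and "young_function \<Phi>"
    and "\<exists>c>0. \<forall>t\<ge>1. \<Phi> t \<le> c * t powr p"
    and "diffeomorphism \<psi>"
    and "bounded_composition_morrey_orlicz \<Phi> p \<psi>"
  shows "\<exists>C>0. \<forall>x0. \<forall>f \<in> morrey_orlicz_space \<Phi> p.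
           morrey_orlicz_norm \<Phi> p (\<lambda>x. f (jacobian \<psi> (at x0) *v x))
             \<le> ennreal C * morrey_orlicz_norm \<Phi> p f"
proof -
  obtain c0 where c0: "c0 > 0" "\<forall>t\<ge>1. \<Phi> t \<le> c0 * t powr p" using assms(3) by blast
  define c where "c = max c0 1"
  have c1: "c \<ge> 1" by (simp add: c_def)
  have growth: "\<Phi> t \<le> c * t powr p" if "t \<ge> 1" for t
  proof -
    have "\<Phi> t \<le> c0 * t powr p" using c0 that by blast
    also have "\<dots> \<le> c * t powr p" by (intro mult_right_mono) (auto simp: c_def)
    finally show ?thesis .
  qed
  have comp: "\<And>f. f \<in> morrey_orlicz_space \<Phi> p \<Longrightarrow> f \<circ> \<psi> \<in> morrey_orlicz_space \<Phi> p"
    using assms(5) by (simp add: bounded_composition_morrey_orlicz_def)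
  obtain K where K: "K > 0" and bnd: "\<And>f. f \<in> morrey_orlicz_space \<Phi> p \<Longrightarrow>
      morrey_orlicz_norm \<Phi> p (f \<circ> \<psi>) \<le> ennreal K * morrey_orlicz_norm \<Phi> p f"
    using assms(5) unfolding bounded_composition_morrey_orlicz_def by blast
  show ?thesis
  proof (intro exI[of _ K] conjI allI ballI)
    show "K > 0" by (rule K)
    fix x0 :: "real^'n" and f :: "real^'n \<Rightarrow> real" assume f: "f \<in> morrey_orlicz_space \<Phi> p"
    interpret MOx \<Phi> p \<psi> K c x0
      by unfold_locales (use assms(1,2,4) c1 growth comp bnd K in auto)
    have "morrey_orlicz_norm \<Phi> p (\<lambda>x. f (LA x)) \<le> ennreal K * morrey_orlicz_norm \<Phi> p f"
      by (rule main[OF f])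
    then show "morrey_orlicz_norm \<Phi> p (\<lambda>x. f (jacobian \<psi> (at x0) *v x)) \<le> ennreal K * morrey_orlicz_norm \<Phi> p f"
      by (simp add: LA_def)
  qed
qed


end
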